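(* Let $R\subseteq\mathbb{Q}_{>0}\setminus\{1\}$ be non-empty. If $\omega(G(R))=\infty$ (i.e. $G(R)$ contains cliques of every finite size), then $R$ is a set of (measurable) multiplicative recurrence.
   Context: $G(R)$ is the graph with vertex set $\mathbb{N}=\{1,2,\dots\}$ and edge set $\{\{m,n\}: m/n\in R\}$; $\omega$ denotes the clique number. A set $R\subseteq \mathbb{Q}_{>0}\setminus\{1\}$ is a set of (measurable) multiplicative recurrence if for every measure-preserving action $T=(T_n)_{n\in\mathbb{N}}$ of the semigroup $(\mathbb{N},\times)$ on a probability space $(X,\mathcal{B},\mu)$ (each $T_n$ measure-preserving, $T_{mn}=T_m\circ T_n$) and every $B\in\mathcal{B}$ with $\mu(B)>0$, there exist $m,n\in\mathbb{N}$ with $m/n\in R$ and $\mu(T_m^{-1}B\cap T_n^{-1}B)>0$. *)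

theory Defs
  imports "HOL-Probability.Probability"
begin

text \<open>Edges of G(R): vertices are positive naturals, {m,n} is an edge iff m/n in R
  (the edge set is unordered, so either orientation of the quotient may lie in R).\<close>
definition GR_edge :: "rat set \<Rightarrow> nat \<Rightarrow> nat \<Rightarrow> bool" where
  "GR_edge R m n \<longleftrightarrow> of_nat m / of_nat n \<in> R \<or> of_nat n / of_nat m \<in> R"

definition GR_clique :: "rat set \<Rightarrow> nat set \<Rightarrow> bool" where
  "GR_clique R C \<longleftrightarrow> C \<subseteq> {1..} \<and>
     (\<forall>m\<in>C. \<forall>n\<in>C. m \<noteq> n \<longrightarrow> GR_edge R m n)"

definition GR_infinite_clique_number :: "rat set \<Rightarrow> bool" where
  "GR_infinite_clique_number R \<longleftrightarrow>
     (\<forall>k::nat. \<exists>C. finite C \<and> card C = k \<and> GR_clique R C)"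

definition mp_map :: "'a measure \<Rightarrow> ('a \<Rightarrow> 'a) \<Rightarrow> bool" where
  "mp_map M f \<longleftrightarrow> f \<in> measurable M M \<and>
     (\<forall>A\<in>sets M. emeasure M (f -` A \<inter> space M) = emeasure M A)"

definition mp_action :: "'a measure \<Rightarrow> (nat \<Rightarrow> 'a \<Rightarrow> 'a) \<Rightarrow> bool" where
  "mp_action M T \<longleftrightarrow>
     (\<forall>n\<ge>1. mp_map M (T n)) \<and>
     (\<forall>m\<ge>1. \<forall>n\<ge>1. T (m * n) = T m \<circ> T n)"

text \<open>R is a set of multiplicative recurrence for actions on the probability space M.
  Being a set of multiplicative recurrence means this holds for every probability space M
  (of every type).\<close>
definition mult_recurrent_on :: "rat set \<Rightarrow> 'a measure \<Rightarrow> bool" where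
  "mult_recurrent_on R M \<longleftrightarrow>
     (\<forall>T. mp_action M T \<longrightarrow>
        (\<forall>B\<in>sets M. measure M B > 0 \<longrightarrow>
           (\<exists>m n. m \<ge> 1 \<and> n \<ge> 1 \<and> of_nat m / of_nat n \<in> R \<and>
              measure M (T m -` B \<inter> T n -` B \<inter> space M) > 0)))"

end

theory Submission
  imports Defs
begin

theorem lemma3p1:
  fixes R :: "rat set" and M :: "'a measure"
  assumes "R \<subseteq> {q. q > 0 \<and> q \<noteq> 1}"
    and "R \<noteq> {}"
    and "GR_infinite_clique_number R"
    and "prob_space M"
  shows "mult_recurrent_on R M"
  unfolding mult_recurrent_on_def
proof (intro allI impI ballI)
  interpret P: prob_space M by fact
  fix T B assume act: "mp_action M T" and B: "B \<in> sets M" and pos: "measure M B > 0"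
  obtain k :: nat where k: "1 / measure M B < real k" using reals_Archimedean2 by blast
  then have kb: "real k * measure M B > 1" using pos by (simp add: field_simps)
  obtain C where C: "finite C" "card C = k" "GR_clique R C"
    using assms(3) unfolding GR_infinite_clique_number_def by blast
  have C1: "\<And>n. n \<in> C \<Longrightarrow> n \<ge> 1" using C(3) unfolding GR_clique_def by auto
  define A where "A n = T n -` B \<inter> space M" for n
  have Asets: "A n \<in> sets M" if "n \<in> C" for n
  proof -
    have "mp_map M (T n)" using act C1[OF that] unfolding mp_action_def by auto
    then have "T n \<in> measurable M M" unfolding mp_map_def by auto
    then show ?thesis unfolding A_def using B by (rule measurable_sets)
  qed
  have Ameas: "measure M (A n) = measure M B" if "n \<in> C" for n
  proof -
    have "mp_map M (T n)" using act C1[OF that] unfolding mp_action_def by auto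
    then have "emeasure M (A n) = emeasure M B" unfolding mp_map_def A_def using B by auto
    then show ?thesis by (simp add: measure_def)
  qed
  show "\<exists>m n. 1 \<le> m \<and> 1 \<le> n \<and> rat_of_nat m / rat_of_nat n \<in> R \<and>
              0 < measure M (T m -` B \<inter> T n -` B \<inter> space M)"
  proof (rule ccontr)
    assume H: "\<not> ?thesis"
    have null: "measure M (A m \<inter> A n) = 0" if "m \<in> C" "n \<in> C" "m \<noteq> n" for m n
    proof -
      have e: "GR_edge R m n" using C(3) that unfolding GR_clique_def by auto
      have eq: "A m \<inter> A n = T m -` B \<inter> T n -` B \<inter> space M"
               "A m \<inter> A n = T n -` B \<inter> T m -` B \<inter> space M" unfolding A_def by auto
      show ?thesis
      proof (cases "rat_of_nat m / rat_of_nat n \<in> R")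
        case True
        then have "\<not> 0 < measure M (T m -` B \<inter> T n -` B \<inter> space M)"
          using H C1 that by blast
        then show ?thesis using eq(1) measure_nonneg[of M] by (metis order_less_le)
      next
        case False
        then have "rat_of_nat n / rat_of_nat m \<in> R" using e unfolding GR_edge_def by auto
        then have "\<not> 0 < measure M (T n -` B \<inter> T m -` B \<inter> space M)"
          using H C1 that by blast
        then show ?thesis using eq(2) measure_nonneg[of M] by (metis order_less_le)
      qed
    qed
    have pw: "pairwise (\<lambda>i j. AE x in M. x \<notin> A i \<or> x \<notin> A j) C"
      unfolding pairwise_def
    proof (intro ballI impI)
      fix i j assume ij: "i \<in> C" "j \<in> C" "i \<noteq> j"
      have "A i \<inter> A j \<in> null_sets M"
        using null[OF ij] Asets ij by (simp add: P.emeasure_eq_measure null_sets_def)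
      then have "AE x in M. x \<notin> A i \<inter> A j" by (rule AE_not_in)
      then show "AE x in M. x \<notin> A i \<or> x \<notin> A j" by (rule eventually_mono) auto
    qed
    have "measure M (\<Union>i\<in>C. A i) = (\<Sum>i\<in>C. measure M (A i))"
      by (rule measure_UNION_AE[OF C(1)]) (use Asets pw in \<open>auto simp: fmeasurable_def P.emeasure_eq_measure\<close>)
    also have "\<dots> = real k * measure M B" using Ameas C(2) by simp
    finally have "real k * measure M B \<le> 1" using P.prob_le_1 by metis
    then show False using kb by simp
  qed
qed

end
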